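(* Let $q=p^f$ with $p$ prime, and let $R=\mathbb F_{q^2}+\mathbb F_{q^2}u$ with $u^2=0$ and $ua=a^qu$ for $a\in\mathbb F_{q^2}$. Let $\rho=(R,R,\beta,\Phi)$ with $\beta$ and $\Phi$ as defined below. Then $\rho$ is a form ring (with $\beta$ admissible, associated anti-automorphism $(r+su)^J=r-s^qu$ and $\beta(v,w)=\beta(w,-v)$), and a left $R$-submodule $C\le R^N$ is a code of Type $\rho$ if and only if $C=C^{\perp_H}$, where $C^{\perp_H}=\{x\in R^N:\sum_{i=1}^N x_i\overline{c_i}=0\ \forall c\in C\}$ and $\overline{a+bu}:=a^q-bu$.
   Context: $\beta:R\times R\to\tfrac1p\mathbb Z/\mathbb Z$, $\beta(a'+b'u,a+bu):=\tfrac1p\mathrm{Tr}(ab'-a'b)$ with $\mathrm{Tr}$ the trace $\mathbb F_{q^2}\to\mathbb F_p\cong\mathbb Z/p\mathbb Z$. $\phi_0:R\to\tfrac1p\mathbb Z/\mathbb Z$, $\phi_0(a+bu):=\tfrac1p\mathrm{Tr}_{\mathbb F_q/\mathbb F_p}(a\,a^q)$, and $\Phi$ is the subgroup of maps $R\to\mathbb Q/\mathbb Z$ generated by $\{\phi_0[r]:r\in R\}$, where $(\phi[r])(v)=\phi(rv)$. General definitions: for a finite ring $R$ and finite left module $V$, $\beta:V\times V\to\mathbb Q/\mathbb Z$ biadditive is admissible if $v\mapsto\beta(v,\cdot)$ is an isomorphism $V\to\mathrm{Hom}(V,\mathbb Q/\mathbb Z)$, the set $M=\{\beta_r:r\in R\}$,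 $\beta_r(v,w)=\beta(v,rw)$, is closed under $\beta\mapsto\beta^\tau$, $\beta^\tau(v,w)=\beta(w,v)$, and $r\mapsto\beta_r$ is bijective; $J$ is defined by $\beta(rv,w)=\beta(v,r^Jw)$. $\mathrm{Quad}_0(V,\mathbb Q/\mathbb Z)$ is the group of maps $\phi$ with $\phi(0)=0$ and $\phi(x+y+z)-\phi(x+y)-\phi(x+z)-\phi(y+z)+\phi(x)+\phi(y)+\phi(z)=0$; $\{\!\{\beta\}\!\}(v)=\beta(v,v)$, $\lambda(\phi)(v,w)=\phi(v+w)-\phi(v)-\phi(w)$. A form ring is $(R,V,\beta,\Phi)$ with $\beta$ admissible and $\Phi\le\mathrm{Quad}_0$ a subgroup closed under all $\phi\mapsto\phi[r]$, with $\{\!\{M\}\!\}\subseteq\Phi$ and $\lambda(\Phi)\subseteq M$. A code of Type $\rho$ is a left submodule $C\le V^N$ with $C=\{x:\sum_i\beta(x_i,c_i)=0\ \forall c\in C\}$ and $\sum_i\phi(c_i)=0$ for all $c\in C,\phi\in\Phi$. *)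

theory Defs
  imports Complex_Main "HOL-Library.Product_Plus" "HOL-Computational_Algebra.Primes"
begin

definition qz_rel :: "rat \<Rightarrow> rat \<Rightarrow> bool" where
  "qz_rel x y \<longleftrightarrow> x - y \<in> \<int>"

lemma qz_rel_equivp: "equivp qz_rel"
proof (rule equivpI)
  show "reflp qz_rel" by (auto simp: reflp_def qz_rel_def)
  show "symp qz_rel" unfolding symp_def qz_rel_def
    by (metis Ints_minus minus_diff_eq)
  show "transp qz_rel" unfolding transp_def qz_rel_def
    by (metis Ints_add diff_add_cancel add_diff_eq diff_add_eq)
qed

quotient_type qz = rat / qz_rel
  by (rule qz_rel_equivp)

instantiation qz :: ab_group_add
begin
lift_definition zero_qz :: qz is "0::rat" .
lift_definition plus_qz :: "qz \<Rightarrow> qz \<Rightarrow> qz" is "(+)"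
  unfolding qz_rel_def
  by (metis Ints_add add_diff_add)
lift_definition uminus_qz :: "qz \<Rightarrow> qz" is "uminus"
  unfolding qz_rel_def by (metis Ints_minus minus_diff_eq minus_diff_minus)
lift_definition minus_qz :: "qz \<Rightarrow> qz \<Rightarrow> qz" is "(-)"
  unfolding qz_rel_def
  by (metis Ints_diff diff_diff_eq2 diff_add_eq add_diff_add diff_conv_add_uminus add_uminus_conv_diff
        minus_diff_eq diff_add_cancel)
instance
  by standard (transfer; simp add: qz_rel_def algebra_simps)+
end

definition qz_of :: "rat \<Rightarrow> qz" where "qz_of = abs_qz"

definition ring_on :: "('r::ab_group_add \<Rightarrow> 'r \<Rightarrow> 'r) \<Rightarrow> 'r \<Rightarrow> bool" where
  "ring_on rmul one \<longleftrightarrow>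
     (\<forall>a b c. rmul (rmul a b) c = rmul a (rmul b c)) \<and>
     (\<forall>a b c. rmul a (b + c) = rmul a b + rmul a c) \<and>
     (\<forall>a b c. rmul (a + b) c = rmul a c + rmul b c) \<and>
     (\<forall>a. rmul one a = a \<and> rmul a one = a)"

definition left_module_on ::
  "('r::ab_group_add \<Rightarrow> 'r \<Rightarrow> 'r) \<Rightarrow> 'r \<Rightarrow> ('r \<Rightarrow> 'v::ab_group_add \<Rightarrow> 'v) \<Rightarrow> bool" where
  "left_module_on rmul one smul \<longleftrightarrow>
     ring_on rmul one \<and>
     (\<forall>r s v. smul (rmul r s) v = smul r (smul s v)) \<and>
     (\<forall>r v w. smul r (v + w) = smul r v + smul r w) \<and>
     (\<forall>r s v. smul (r + s) v = smul r v + smul s v) \<and>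
     (\<forall>v. smul one v = v)"

definition additive_hom :: "('v::ab_group_add \<Rightarrow> qz) \<Rightarrow> bool" where
  "additive_hom \<chi> \<longleftrightarrow> (\<forall>x y. \<chi> (x + y) = \<chi> x + \<chi> y)"

definition biadditive :: "('v::ab_group_add \<Rightarrow> 'v \<Rightarrow> qz) \<Rightarrow> bool" where
  "biadditive \<beta> \<longleftrightarrow> (\<forall>v. additive_hom (\<beta> v)) \<and> (\<forall>w. additive_hom (\<lambda>v. \<beta> v w))"

definition beta_r :: "('r \<Rightarrow> 'v \<Rightarrow> 'v) \<Rightarrow> ('v \<Rightarrow> 'v \<Rightarrow> qz) \<Rightarrow> 'r \<Rightarrow> 'v \<Rightarrow> 'v \<Rightarrow> qz" where
  "beta_r smul \<beta> r = (\<lambda>v w. \<beta> v (smul r w))"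

definition transp_form :: "('v \<Rightarrow> 'v \<Rightarrow> qz) \<Rightarrow> 'v \<Rightarrow> 'v \<Rightarrow> qz" where
  "transp_form \<beta> = (\<lambda>v w. \<beta> w v)"

definition forms_M :: "('r \<Rightarrow> 'v \<Rightarrow> 'v) \<Rightarrow> ('v \<Rightarrow> 'v \<Rightarrow> qz) \<Rightarrow> ('v \<Rightarrow> 'v \<Rightarrow> qz) set" where
  "forms_M smul \<beta> = range (beta_r smul \<beta>)"

definition admissible ::
  "('r \<Rightarrow> 'v::ab_group_add \<Rightarrow> 'v) \<Rightarrow> ('v \<Rightarrow> 'v \<Rightarrow> qz) \<Rightarrow> bool" where
  "admissible smul \<beta> \<longleftrightarrow>
     biadditive \<beta> \<and>
     bij_betw \<beta> UNIV {\<chi>. additive_hom \<chi>} \<and>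
     (\<forall>m \<in> forms_M smul \<beta>. transp_form m \<in> forms_M smul \<beta>) \<and>
     bij_betw (beta_r smul \<beta>) UNIV (forms_M smul \<beta>)"

definition Quad0 :: "('v::ab_group_add \<Rightarrow> qz) set" where
  "Quad0 = {\<phi>. \<phi> 0 = 0 \<and>
     (\<forall>x y z. \<phi> (x + y + z) - \<phi> (x + y) - \<phi> (x + z) - \<phi> (y + z)
               + \<phi> x + \<phi> y + \<phi> z = 0)}"

definition diag_form :: "('v \<Rightarrow> 'v \<Rightarrow> qz) \<Rightarrow> 'v \<Rightarrow> qz" where
  "diag_form \<beta> = (\<lambda>v. \<beta> v v)"

definition lambda_q :: "('v::ab_group_add \<Rightarrow> qz) \<Rightarrow> 'v \<Rightarrow> 'v \<Rightarrow> qz" where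
  "lambda_q \<phi> = (\<lambda>v w. \<phi> (v + w) - \<phi> v - \<phi> w)"

definition phi_r :: "('r \<Rightarrow> 'v \<Rightarrow> 'v) \<Rightarrow> ('v \<Rightarrow> qz) \<Rightarrow> 'r \<Rightarrow> 'v \<Rightarrow> qz" where
  "phi_r smul \<phi> r = (\<lambda>v. \<phi> (smul r v))"

definition is_subgroup_fun :: "('v \<Rightarrow> qz) set \<Rightarrow> bool" where
  "is_subgroup_fun \<Phi> \<longleftrightarrow> (\<lambda>_. 0) \<in> \<Phi> \<and>
     (\<forall>\<phi>\<in>\<Phi>. \<forall>\<psi>\<in>\<Phi>. (\<lambda>v. \<phi> v - \<psi> v) \<in> \<Phi>)"

definition form_ring ::
  "('r::ab_group_add \<Rightarrow> 'r \<Rightarrow> 'r) \<Rightarrow> 'r \<Rightarrow> ('r \<Rightarrow> 'v::ab_group_add \<Rightarrow> 'v)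
   \<Rightarrow> ('v \<Rightarrow> 'v \<Rightarrow> qz) \<Rightarrow> ('v \<Rightarrow> qz) set \<Rightarrow> bool" where
  "form_ring rmul one smul \<beta> \<Phi> \<longleftrightarrow>
     left_module_on rmul one smul \<and>
     admissible smul \<beta> \<and>
     \<Phi> \<subseteq> Quad0 \<and> is_subgroup_fun \<Phi> \<and>
     (\<forall>\<phi>\<in>\<Phi>. \<forall>r. phi_r smul \<phi> r \<in> \<Phi>) \<and>
     diag_form ` forms_M smul \<beta> \<subseteq> \<Phi> \<and>
     lambda_q ` \<Phi> \<subseteq> forms_M smul \<beta>"

inductive_set gen_subgroup :: "('v \<Rightarrow> qz) set \<Rightarrow> ('v \<Rightarrow> qz) set" for S where
  gen_base: "\<phi> \<in> S \<Longrightarrow> \<phi> \<in> gen_subgroup S"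
| gen_zero: "(\<lambda>_. 0) \<in> gen_subgroup S"
| gen_diff: "\<phi> \<in> gen_subgroup S \<Longrightarrow> \<psi> \<in> gen_subgroup S \<Longrightarrow> (\<lambda>v. \<phi> v - \<psi> v) \<in> gen_subgroup S"

text \<open>Left submodules of \<open>V^N\<close>, with \<open>N = CARD('n)\<close>.\<close>
definition left_submodule :: "('r \<Rightarrow> 'v::ab_group_add \<Rightarrow> 'v) \<Rightarrow> ('n \<Rightarrow> 'v) set \<Rightarrow> bool" where
  "left_submodule smul C \<longleftrightarrow> (\<lambda>_. 0) \<in> C \<and>
     (\<forall>x\<in>C. \<forall>y\<in>C. (\<lambda>i. x i + y i) \<in> C) \<and>
     (\<forall>r. \<forall>x\<in>C. (\<lambda>i. smul r (x i)) \<in> C)"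

definition is_code_of_type ::
  "('r \<Rightarrow> 'v::ab_group_add \<Rightarrow> 'v) \<Rightarrow> ('v \<Rightarrow> 'v \<Rightarrow> qz) \<Rightarrow> ('v \<Rightarrow> qz) set
   \<Rightarrow> ('n::finite \<Rightarrow> 'v) set \<Rightarrow> bool" where
  "is_code_of_type smul \<beta> \<Phi> C \<longleftrightarrow>
     left_submodule smul C \<and>
     C = {x. \<forall>c\<in>C. (\<Sum>i\<in>UNIV. \<beta> (x i) (c i)) = 0} \<and>
     (\<forall>c\<in>C. \<forall>\<phi>\<in>\<Phi>. (\<Sum>i\<in>UNIV. \<phi> (c i)) = 0)"

text \<open>Elements \<open>a + b u\<close> of \<open>R\<close> are represented as pairs \<open>(a, b)\<close>; addition is
  componentwise. Multiplication uses \<open>u^2 = 0\<close>, \<open>u c = c^q u\<close>: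
  \<open>(a + b u)(c + d u) = a c + (a d + b c^q) u\<close>.\<close>
definition Rmult :: "nat \<Rightarrow> 'a::field \<times> 'a \<Rightarrow> 'a \<times> 'a \<Rightarrow> 'a \<times> 'a" where
  "Rmult q x y = (fst x * fst y, fst x * snd y + snd x * (fst y) ^ q)"

definition Rone :: "'a::field \<times> 'a" where "Rone = (1, 0)"

definition trace_to_prime :: "nat \<Rightarrow> nat \<Rightarrow> 'a::field \<Rightarrow> 'a" where
  "trace_to_prime p n x = (\<Sum>i<n. x ^ (p ^ i))"

definition prime_field_nat :: "nat \<Rightarrow> 'a::field \<Rightarrow> nat" where
  "prime_field_nat p y = (THE k. k < p \<and> of_nat k = y)"

definition fp_to_qz :: "nat \<Rightarrow> 'a::field \<Rightarrow> qz" where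
  "fp_to_qz p y = qz_of (of_nat (prime_field_nat p y) / of_nat p)"

text \<open>\<open>\<beta>(a'+b'u, a+bu) = (1/p) Tr(a b' - a' b)\<close>, trace \<open>F_{q^2} \<rightarrow> F_p\<close>, \<open>q = p^f\<close>.\<close>
definition beta_R :: "nat \<Rightarrow> nat \<Rightarrow> 'a::field \<times> 'a \<Rightarrow> 'a \<times> 'a \<Rightarrow> qz" where
  "beta_R p f v w = fp_to_qz p (trace_to_prime p (2 * f) (fst w * snd v - fst v * snd w))"

text \<open>\<open>\<phi>_0(a+bu) = (1/p) Tr_{F_q/F_p}(a a^q)\<close>.\<close>
definition phi0_R :: "nat \<Rightarrow> nat \<Rightarrow> 'a::field \<times> 'a \<Rightarrow> qz" where
  "phi0_R p f v = fp_to_qz p (trace_to_prime p f (fst v * fst v ^ (p ^ f)))"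

definition Phi_R :: "nat \<Rightarrow> nat \<Rightarrow> ('a::field \<times> 'a \<Rightarrow> qz) set" where
  "Phi_R p f = gen_subgroup {phi_r (Rmult (p ^ f)) (phi0_R p f) r | r. True}"

definition J_R :: "nat \<Rightarrow> 'a::field \<times> 'a \<Rightarrow> 'a \<times> 'a" where
  "J_R q x = (fst x, - (snd x ^ q))"

definition Rconj :: "nat \<Rightarrow> 'a::field \<times> 'a \<Rightarrow> 'a \<times> 'a" where
  "Rconj q x = (fst x ^ q, - snd x)"

definition herm_dual :: "nat \<Rightarrow> ('n::finite \<Rightarrow> 'a::field \<times> 'a) set \<Rightarrow> ('n \<Rightarrow> 'a \<times> 'a) set" where
  "herm_dual q C = {x. \<forall>c\<in>C. (\<Sum>i\<in>UNIV. Rmult q (x i) (Rconj q (c i))) = 0}"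

end

theory Submission
  imports Defs "HOL-Number_Theory.Residues" "HOL-Computational_Algebra.Polynomial"
begin


lift_definition qe :: "qz \<Rightarrow> complex" is "\<lambda>r. cis (2 * pi * of_rat r)"
proof -
  fix x y :: rat assume "qz_rel x y"
  then obtain n where n: "x - y = of_int n" unfolding qz_rel_def by (auto elim: Ints_cases)
  then have "of_rat x = of_rat y + (of_int n :: real)" by (metis add.commute diff_add_cancel of_rat_add of_rat_of_int_eq)
  then have "cis (2 * pi * of_rat x) = cis (2 * pi * of_rat y) * cis (2 * pi * of_int n)"
    by (simp add: cis_mult algebra_simps)
  then show "cis (2 * pi * of_rat x) = cis (2 * pi * of_rat y)" by simp
qed

lemma qe_add: "qe (a + b) = qe a * qe b"
  by transfer (simp add: cis_mult of_rat_add algebra_simps)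

lemma qe_zero: "qe 0 = 1"
  by transfer simp

lemma qe_eq_1: "qe a = 1 \<Longrightarrow> a = 0"
proof transfer
  fix r :: rat assume "cis (2 * pi * of_rat r) = 1"
  then have "cos (2 * pi * of_rat r) = 1" by (metis cis.sel(1) one_complex.sel(1))
  then obtain n :: int where "2 * pi * of_rat r = of_int n * 2 * pi" by (auto simp: cos_one_2pi_int)
  then have "(of_rat r :: real) = of_rat (of_int n)" by simp
  then have "r = of_int n" by (simp only: of_rat_eq_iff)
  then show "qz_rel r 0" by (simp add: qz_rel_def)
qed

lemma char_sum_zero:
  fixes \<psi> :: "'v::{finite,ab_group_add} \<Rightarrow> qz"
  assumes add: "\<And>x y. \<psi> (x + y) = \<psi> x + \<psi> y" and nz: "\<psi> v0 \<noteq> 0"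
  shows "(\<Sum>v\<in>UNIV. qe (\<psi> v)) = 0"
proof -
  have "(\<Sum>v\<in>UNIV. qe (\<psi> v)) = (\<Sum>v\<in>UNIV. qe (\<psi> (v + v0)))"
    by (rule sum.reindex_bij_witness[of _ "\<lambda>v. v + v0" "\<lambda>v. v - v0"]) auto
  also have "\<dots> = qe (\<psi> v0) * (\<Sum>v\<in>UNIV. qe (\<psi> v))"
    by (simp add: add qe_add sum_distrib_left mult.commute)
  finally have "(1 - qe (\<psi> v0)) * (\<Sum>v\<in>UNIV. qe (\<psi> v)) = 0" by (simp add: algebra_simps)
  moreover have "1 - qe (\<psi> v0) \<noteq> 0" using qe_eq_1 nz by force
  ultimately show ?thesis by simp
qed

locale FF =
  fixes p f :: nat and TYa :: "'a::{field,finite} itself"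
  assumes pp: "prime p" and cardF: "card (UNIV::'a set) = (p^f)^2"
begin

lemma CHAR_eq: "CHAR('a) = p"
proof -
  have pos: "CHAR('a) > 0" by (rule finite_imp_CHAR_pos) simp
  have pr: "prime CHAR('a)" by (rule prime_CHAR_semidom[OF pos])
  have e: "(p^f)^2 = p^(2*f)" by (metis power_mult mult.commute)
  have "CHAR('a) dvd p ^ (2*f)" using CHAR_dvd_CARD[where 'a='a] cardF e by simp
  then have "CHAR('a) dvd p" using pr prime_dvd_power by blast
  then show ?thesis using pr pp by (metis prime_nat_iff prime_gt_1_nat less_irrefl)
qed

lemma p_gt1: "p > 1" using pp prime_gt_1_nat by blast

lemma f_pos: "f > 0"
proof (rule ccontr)
  assume "\<not> f > 0"
  then have "card (UNIV::'a set) = 1" using cardF by simp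
  moreover have "{0::'a, 1} \<subseteq> UNIV" by simp
  then have "card {0::'a, 1} \<le> card (UNIV::'a set)" by (intro card_mono) auto
  ultimately show False by simp
qed

lemma q_ge2: "p^f \<ge> 2"
proof -
  have "p^f \<ge> p^1" using p_gt1 f_pos by (intro power_increasing) auto
  then show ?thesis using p_gt1 by simp
qed

lemma frob_add: "(x + y :: 'a) ^ (p^k) = x^(p^k) + y^(p^k)"
  using freshmans_dream'[of "p^k" k x y] CHAR_eq pp by simp

lemma frob_sum: "(sum (g :: 'b \<Rightarrow> 'a) A) ^ (p^k) = sum (\<lambda>i. g i ^ (p^k)) A"
  using freshmans_dream_sum'[of "p^k" k g A] CHAR_eq pp by simp

lemma frob_neg: "(- x :: 'a) ^ (p^k) = - (x^(p^k))"
proof -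
  have "(x + (-x))^(p^k) = x^(p^k) + (-x)^(p^k)" by (rule frob_add)
  moreover have "(0::'a)^(p^k) = 0" using p_gt1 by simp
  ultimately show ?thesis using p_gt1 by (simp add: eq_neg_iff_add_eq_0 add.commute)
qed

lemma frob_diff: "(x - y :: 'a) ^ (p^k) = x^(p^k) - y^(p^k)"
  using frob_add[of x "-y" k] frob_neg[of y k] by simp

lemma pow_card: "(x::'a) ^ card (UNIV::'a set) = x"
proof (cases "x = 0")
  case False
  have "x * (\<Prod>y\<in>UNIV-{0}. x * y) = x * x ^ (card (UNIV :: 'a set) - 1) * \<Prod>(UNIV-{0})"
    by (simp add: prod.distrib mult_ac)
  also have "x * x ^ (card (UNIV :: 'a set) - 1) = x ^ Suc (card (UNIV :: 'a set) - 1)"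
    by (subst power_Suc) auto
  also have "Suc (card (UNIV :: 'a set) - 1) = card (UNIV :: 'a set)"
    using finite_UNIV_card_ge_0[where ?'a = 'a] by simp
  also have "(\<Prod>y\<in>UNIV-{0}. x * y) = (\<Prod>y\<in>UNIV-{0}. y)"
    by (rule prod.reindex_bij_witness[of _ "\<lambda>y. y / x" "\<lambda>y. x * y"]) (use False in auto)
  finally show ?thesis
    by simp
qed (use finite_UNIV_card_ge_0[where ?'a = 'a] in auto)

lemma pow_qq: "(x::'a) ^ (p^f * p^f) = x"
  using pow_card[of x] cardF by (simp add: power2_eq_square)

lemma pow_p2f: "(x::'a) ^ (p^(2*f)) = x"
  using pow_qq by (simp add: mult_2 power_add)

lemma poly_roots_card:
  fixes P :: "'a poly"
  assumes "P \<noteq> 0"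
  shows "card {x. poly P x = 0} \<le> degree P"
  by (rule card_poly_roots_bound[OF assms])

lemma roots_XnX:
  assumes "n \<ge> 2"
  shows "card {y::'a. y^n = y} \<le> n"
proof -
  define P :: "'a poly" where "P = monom 1 n + [:0,-1:]"
  have dP: "degree P = n" unfolding P_def using assms
    by (subst degree_add_eq_left) (auto simp: degree_monom_eq)
  then have "P \<noteq> 0" using assms by auto
  moreover have "{y::'a. y^n = y} = {x. poly P x = 0}" by (auto simp: P_def poly_monom)
  ultimately show ?thesis using card_poly_roots_bound[of P] dP by simp
qed

lemma roots_Xnc:
  assumes "n \<ge> 1"
  shows "card {y::'a. y^n = c} \<le> n"
proof -
  define P :: "'a poly" where "P = monom 1 n + [:-c:]"
  have dP: "degree P = n" unfolding P_def using assms
    by (subst degree_add_eq_left) (auto simp: degree_monom_eq)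
  then have "P \<noteq> 0" using assms by auto
  moreover have "{y::'a. y^n = c} = {x. poly P x = 0}" by (auto simp: P_def poly_monom)
  ultimately show ?thesis using card_poly_roots_bound[of P] dP by simp
qed

lemma of_nat_pow_p: "(of_nat k :: 'a) ^ p = of_nat k"
proof (induction k)
  case 0 then show ?case using p_gt1 by simp
next
  case (Suc k)
  have "(of_nat k + 1 :: 'a) ^ (p^1) = of_nat k ^ (p^1) + 1 ^ (p^1)" by (rule frob_add)
  then show ?case using Suc by (simp add: add.commute)
qed

lemma of_nat_inj_p: "k < p \<Longrightarrow> l < p \<Longrightarrow> (of_nat k :: 'a) = of_nat l \<Longrightarrow> k = l"
  using of_nat_eq_iff_cong_CHAR[where 'a='a, of k l] CHAR_eq by (simp add: cong_def)

lemma fp_is_nat: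
  assumes "(y::'a) ^ p = y"
  shows "\<exists>k<p. y = of_nat k"
proof -
  let ?S = "{y::'a. y^p = y}"
  have sub: "of_nat ` {..<p} \<subseteq> ?S" using of_nat_pow_p by auto
  have c1: "card (of_nat ` {..<p} :: 'a set) = p"
    by (subst card_image) (auto intro!: inj_onI simp: of_nat_inj_p)
  have c2: "card ?S \<le> p" using roots_XnX p_gt1 by simp
  have "of_nat ` {..<p} = ?S"
    by (rule card_subset_eq) (use sub c1 c2 card_mono[OF _ sub] in auto)
  then show ?thesis using assms by auto
qed

lemma pfn_of_nat: "prime_field_nat p (of_nat k :: 'a) = k mod p"
  unfolding prime_field_nat_def
proof (rule the_equality)
  show "k mod p < p \<and> (of_nat (k mod p) :: 'a) = of_nat k"
    using p_gt1 of_nat_eq_iff_cong_CHAR[where 'a='a, of "k mod p" k] CHAR_eq by (simp add: cong_def)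
next
  fix k' assume "k' < p \<and> (of_nat k' :: 'a) = of_nat k"
  then show "k' = k mod p"
    using of_nat_eq_iff_cong_CHAR[where 'a='a, of k' k] CHAR_eq by (auto simp: cong_def)
qed

lemma qz_of_eq: "r - s \<in> \<int> \<Longrightarrow> qz_of r = qz_of s"
  unfolding qz_of_def by (simp add: qz.abs_eq_iff qz_rel_def)

lemma qz_of_add: "qz_of (r + s) = qz_of r + qz_of s"
  unfolding qz_of_def by (simp add: plus_qz.abs_eq)

lemma qz_of_zero_iff: "qz_of r = 0 \<longleftrightarrow> r \<in> \<int>"
  unfolding qz_of_def by (simp add: zero_qz.abs_eq qz.abs_eq_iff qz_rel_def)

lemma fp_of_nat: "fp_to_qz p (of_nat k :: 'a) = qz_of (of_nat k / of_nat p)"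
proof -
  have "of_nat k / of_nat p - of_nat (k mod p) / (of_nat p :: rat) = of_nat (k div p)"
  proof -
    have "(of_nat k :: rat) = of_nat (k mod p) + of_nat p * of_nat (k div p)"
      by (metis of_nat_add of_nat_mult mod_mult_div_eq)
    then show ?thesis using p_gt1 by (simp add: field_simps)
  qed
  then have "qz_of (of_nat k / of_nat p) = qz_of (of_nat (k mod p) / of_nat p)"
    by (intro qz_of_eq) simp
  then show ?thesis unfolding fp_to_qz_def pfn_of_nat by simp
qed

definition Fp :: "'a \<Rightarrow> bool" where "Fp y \<longleftrightarrow> y ^ p = y"

lemma Fp_add: "Fp x \<Longrightarrow> Fp y \<Longrightarrow> Fp (x + y)"
  using frob_add[of x y 1] by (simp add: Fp_def)
lemma Fp_neg: "Fp x \<Longrightarrow> Fp (- x)"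
  using frob_neg[of x 1] by (simp add: Fp_def)
lemma Fp_diff: "Fp x \<Longrightarrow> Fp y \<Longrightarrow> Fp (x - y)"
  using frob_diff[of x y 1] by (simp add: Fp_def)
lemma Fp_0: "Fp 0" using p_gt1 by (simp add: Fp_def)
lemma Fp_mult: "Fp x \<Longrightarrow> Fp y \<Longrightarrow> Fp (x * y)"
  by (simp add: Fp_def power_mult_distrib)

lemma fp_add: "Fp x \<Longrightarrow> Fp y \<Longrightarrow> fp_to_qz p (x + y) = fp_to_qz p x + fp_to_qz p y"
proof -
  assume "Fp x" "Fp y"
  then obtain k l where "x = of_nat k" "y = of_nat l" using fp_is_nat unfolding Fp_def by blast
  then have "x + y = of_nat (k + l)" by simp
  then show ?thesis using \<open>x = _\<close> \<open>y = _\<close>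
    by (simp only: fp_of_nat) (simp add: add_divide_distrib qz_of_add)
qed

lemma fp_0: "fp_to_qz p (0::'a) = 0"
  using fp_of_nat[of 0] by (simp add: qz_of_zero_iff)

lemma fp_neg: "Fp x \<Longrightarrow> fp_to_qz p (- x) = - fp_to_qz p x"
  using fp_add[of x "-x"] Fp_neg[of x] fp_0 by (simp add: eq_neg_iff_add_eq_0 add.commute)

lemma fp_diff: "Fp x \<Longrightarrow> Fp y \<Longrightarrow> fp_to_qz p (x - y) = fp_to_qz p x - fp_to_qz p y"
  using fp_add[of x "-y"] Fp_neg[of y] fp_neg[of y] by simp

lemma fp_eq_0: "Fp x \<Longrightarrow> fp_to_qz p x = 0 \<Longrightarrow> x = 0"
proof -
  assume "Fp x" "fp_to_qz p x = 0"
  then obtain k where k: "k < p" "x = of_nat k" using fp_is_nat unfolding Fp_def by blast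
  then have "(of_nat k / of_nat p :: rat) \<in> \<int>" using \<open>fp_to_qz p x = 0\<close> fp_of_nat qz_of_zero_iff by simp
  then obtain z where z: "(of_nat k / of_nat p :: rat) = of_int z" by (auto elim: Ints_cases)
  have "0 \<le> (of_nat k / of_nat p :: rat)" by simp
  moreover have "(of_nat k / of_nat p :: rat) < 1" using k p_gt1 by simp
  ultimately have "0 \<le> z" "z < 1" using z by (metis of_int_0_le_iff, metis of_int_less_1_iff)
  then have "z = 0" by simp
  then have "k = 0" using z p_gt1 by simp
  then show ?thesis using k by simp
qed

lemma fp_sum: "(\<And>i. i \<in> A \<Longrightarrow> Fp (g i)) \<Longrightarrow> fp_to_qz p (sum g A) = (\<Sum>i\<in>A. fp_to_qz p (g i))"
proof (induction A rule: infinite_finite_induct)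
  case (infinite A) then show ?case by (simp add: fp_0)
next
  case empty then show ?case by (simp add: fp_0)
next
  case (insert x F)
  have "Fp (sum g F)"
    using insert.prems by (induction F rule: infinite_finite_induct) (auto intro: Fp_add Fp_0)
  then show ?case using insert by (simp add: fp_add)
qed

lemma sum_lessThan_add: "(\<Sum>i<(m::nat)+n. (g::nat\<Rightarrow>'b::comm_monoid_add) i) = (\<Sum>i<m. g i) + (\<Sum>i<n. g (m+i))"
  by (induction n rule: nat.induct) (simp_all add: add_ac)

lemma tr_add: "trace_to_prime p n (x + y :: 'a) = trace_to_prime p n x + trace_to_prime p n y"
  unfolding trace_to_prime_def by (simp add: frob_add sum.distrib)
lemma tr_0: "trace_to_prime p n (0 :: 'a) = 0"
  unfolding trace_to_prime_def using p_gt1 by (simp add: power_0_left)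
lemma tr_neg: "trace_to_prime p n (- x :: 'a) = - trace_to_prime p n x"
  unfolding trace_to_prime_def by (simp add: frob_neg sum_negf)
lemma tr_diff: "trace_to_prime p n (x - y :: 'a) = trace_to_prime p n x - trace_to_prime p n y"
  unfolding trace_to_prime_def by (simp add: frob_diff sum_subtractf)
lemma tr_sum: "trace_to_prime p n (sum (g :: 'b \<Rightarrow> 'a) A) = (\<Sum>j\<in>A. trace_to_prime p n (g j))"
  unfolding trace_to_prime_def by (simp add: frob_sum sum.swap[of _ A])

lemma tr_pow_p: "trace_to_prime p n (x::'a) ^ p = (\<Sum>i<n. x ^ (p ^ Suc i))"
  unfolding trace_to_prime_def using frob_sum[of "\<lambda>i. x ^ (p^i)" "{..<n}" 1]
  by (simp add: power_mult[symmetric] mult.commute)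

lemma tr_Fp: assumes "(x::'a) ^ (p^n) = x" shows "Fp (trace_to_prime p n x)"
proof -
  have "(\<Sum>i<n. x ^ (p ^ Suc i)) + x ^ (p^0) = (\<Sum>i<Suc n. x ^ (p ^ i))"
    by (subst sum.lessThan_Suc_shift) (simp add: add.commute)
  also have "\<dots> = (\<Sum>i<n. x ^ (p ^ i)) + x ^ (p^0)"
    using assms by (simp add: sum.lessThan_Suc)
  finally show ?thesis unfolding Fp_def tr_pow_p by (simp add: trace_to_prime_def)
qed

lemma T_Fp: "Fp (trace_to_prime p (2*f) (x::'a))"
  by (rule tr_Fp) (rule pow_p2f)

lemma T_frob_p: "trace_to_prime p (2*f) ((x::'a) ^ p) = trace_to_prime p (2*f) x"
proof -
  have "trace_to_prime p (2*f) (x ^ p) = trace_to_prime p (2*f) x ^ p"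
    unfolding trace_to_prime_def using frob_sum[of "\<lambda>i. x ^ (p^i)" "{..<2*f}" 1]
    by (simp add: power_mult[symmetric] mult.commute)
  then show ?thesis using T_Fp[of x] by (simp add: Fp_def)
qed

lemma T_frob: "trace_to_prime p (2*f) ((x::'a) ^ (p^k)) = trace_to_prime p (2*f) x"
proof (induction k)
  case (Suc k)
  have "x ^ (p ^ Suc k) = (x ^ (p^k)) ^ p" by (simp add: power_mult[symmetric] mult.commute)
  then show ?case using Suc T_frob_p by simp
qed simp

lemma T_split: "trace_to_prime p (2*f) (z::'a) = trace_to_prime p f z + trace_to_prime p f (z ^ (p^f))"
  unfolding trace_to_prime_def mult_2 sum_lessThan_add
  by (simp add: power_mult[symmetric] power_add)

lemma T_nonzero: "\<exists>z::'a. trace_to_prime p (2*f) z \<noteq> 0"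
proof (rule ccontr)
  assume "\<not> ?thesis"
  then have all0: "\<forall>z::'a. trace_to_prime p (2*f) z = 0" by simp
  define P :: "'a poly" where "P = (\<Sum>i<2*f. monom 1 (p^i))"
  have polyP: "poly P x = trace_to_prime p (2*f) x" for x
    by (simp add: P_def poly_sum poly_monom trace_to_prime_def)
  have inj: "p ^ i = p ^ j \<longleftrightarrow> i = j" for i j using p_gt1 by (simp add: power_inject_exp)
  have "coeff P (p^(2*f-1)) = (\<Sum>i<2*f. if i = 2*f-1 then 1 else 0)"
    by (simp add: P_def coeff_sum coeff_monom inj)
  also have "\<dots> = 1" using f_pos by (simp add: sum.delta)
  finally have "P \<noteq> 0" by auto
  have p1: "Suc 0 \<le> p" using p_gt1 by simp
  have "degree P \<le> p^(2*f-1)" unfolding P_def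
    by (rule degree_sum_le) (auto intro!: order.trans[OF degree_monom_le] power_increasing simp: p1)
  moreover have "p^(2*f-1) < p^(2*f)" using p_gt1 f_pos by (intro power_strict_increasing) auto
  moreover have "card (UNIV::'a set) = p^(2*f)" using cardF by (metis power_mult mult.commute)
  moreover have "{x. poly P x = 0} = UNIV" using all0 polyP by auto
  ultimately show False using card_poly_roots_bound[OF \<open>P \<noteq> 0\<close>] by simp
qed

lemma T_nondeg: "(x::'a) \<noteq> 0 \<Longrightarrow> \<exists>y. trace_to_prime p (2*f) (x * y) \<noteq> 0"
proof -
  assume "x \<noteq> 0"
  obtain z :: 'a where "trace_to_prime p (2*f) z \<noteq> 0" using T_nonzero by blast
  moreover have "x * (z / x) = z" using \<open>x \<noteq> 0\<close> by simp
  ultimately show ?thesis by metis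
qed

lemma norm_surj:
  assumes m0: "(m0::'a) ^ (p^f) = m0"
  shows "\<exists>a::'a. a * a ^ (p^f) = m0"
proof (rule ccontr)
  assume nex: "\<not> ?thesis"
  define q where "q = p^f"
  have q2: "q \<ge> 2" using q_ge2 q_def by simp
  define S where "S = {y::'a. y^q = y}"
  have cS: "card S \<le> q" unfolding S_def using roots_XnX q2 by simp
  have m0n: "m0 \<noteq> 0" using nex by (metis mult_zero_left)
  have "0 \<in> S" using q2 by (simp add: S_def)
  have "m0 \<in> S" using m0 by (simp add: S_def q_def)
  have sub: "(UNIV::'a set) \<subseteq> {0} \<union> (\<Union>m\<in>S-{0,m0}. {a. a^(Suc q) = m})"
  proof
    fix a :: 'a
    show "a \<in> {0} \<union> (\<Union>m\<in>S-{0,m0}. {a. a^(Suc q) = m})"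
    proof (cases "a = 0")
      case False
      have "(a^(Suc q))^q = a^q * a^(q*q)" by (simp add: power_mult_distrib power_mult[symmetric])
      also have "\<dots> = a^(Suc q)" using pow_qq[of a] by (simp add: q_def mult.commute)
      finally have "a^(Suc q) \<in> S" by (simp add: S_def)
      moreover have "a^(Suc q) \<noteq> 0" using False by simp
      moreover have "a^(Suc q) \<noteq> m0" using nex by (simp add: q_def)
      ultimately show ?thesis by auto
    qed simp
  qed
  have fin: "finite S" by simp
  have "card (UNIV::'a set) \<le> card {0::'a} + card (\<Union>m\<in>S-{0,m0}. {a::'a. a^(Suc q) = m})"
    by (rule order.trans[OF card_mono[OF _ sub]]) (auto intro: card_Un_le)
  also have "card (\<Union>m\<in>S-{0,m0}. {a::'a. a^(Suc q) = m}) \<le> (\<Sum>m\<in>S-{0,m0}. card {a::'a. a^(Suc q) = m})"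
    by (rule card_UN_le) simp
  also have "\<dots> \<le> (\<Sum>m\<in>S-{0,m0}. Suc q)"
    by (rule sum_mono) (rule roots_Xnc, simp)
  also have "\<dots> = card (S - {0,m0}) * Suc q" by simp
  also have "card (S - {0,m0}) = card S - 2"
    using \<open>0 \<in> S\<close> \<open>m0 \<in> S\<close> m0n by (subst card_Diff_subset) auto
  finally have "q * q \<le> 1 + (card S - 2) * Suc q" using cardF by (simp add: q_def power2_eq_square)
  also have "\<dots> \<le> 1 + (q - 2) * Suc q" using cS by (intro add_left_mono mult_right_mono) auto
  finally have "q * q \<le> 1 + (q - 2) * Suc q" .
  moreover obtain r where "q = r + 2" using q2 by (metis le_add_diff_inverse2)
  ultimately show False by (simp add: algebra_simps)
qed

lemma fq_add: "(x + y :: 'a) ^ (p^f) = x^(p^f) + y^(p^f)" by (rule frob_add)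
lemma fq_neg: "(- x :: 'a) ^ (p^f) = - (x^(p^f))" by (rule frob_neg)
lemma fq_diff: "(x - y :: 'a) ^ (p^f) = x^(p^f) - y^(p^f)" by (rule frob_diff)
lemma fq_qq: "((x :: 'a) ^ (p^f)) ^ (p^f) = x" using pow_qq by (simp add: power_mult[symmetric])

lemma Rmult_simp: "Rmult (p^f) (a,b) (c,d) = (a*c, a*d + b*c^(p^f))"
  by (simp add: Rmult_def)

lemma ring_R: "ring_on (Rmult (p^f)) (Rone :: 'a \<times> 'a)"
  unfolding ring_on_def
  by (auto simp: Rmult_def Rone_def power_mult_distrib fq_add algebra_simps)

lemma module_R: "left_module_on (Rmult (p^f)) (Rone :: 'a \<times> 'a) (Rmult (p^f))"
  unfolding left_module_on_def using ring_R unfolding ring_on_def by auto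

lemma RM_distL: "Rmult (p^f) (r :: 'a \<times> 'a) (v + w) = Rmult (p^f) r v + Rmult (p^f) r w"
  using ring_R unfolding ring_on_def by blast
lemma RM_distR: "Rmult (p^f) (r + s :: 'a \<times> 'a) v = Rmult (p^f) r v + Rmult (p^f) s v"
  using ring_R unfolding ring_on_def by blast
lemma RM_assoc: "Rmult (p^f) (Rmult (p^f) r s) (v :: 'a \<times> 'a) = Rmult (p^f) r (Rmult (p^f) s v)"
  using ring_R unfolding ring_on_def by blast
lemma RM_zeroR: "Rmult (p^f) (r :: 'a \<times> 'a) 0 = 0"
  using RM_distL[of r 0 0] by simp
lemma RM_zeroL: "Rmult (p^f) 0 (v :: 'a \<times> 'a) = 0"
  using RM_distR[of 0 0 v] by simp
lemma RM_negR: "Rmult (p^f) (r :: 'a \<times> 'a) (- v) = - Rmult (p^f) r v"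
  using RM_distL[of r v "-v"] RM_zeroR[of r] by (simp add: eq_neg_iff_add_eq_0 add.commute)
lemma RM_diffL: "Rmult (p^f) (r - s :: 'a \<times> 'a) v = Rmult (p^f) r v - Rmult (p^f) s v"
  using RM_distR[of "r - s" s v] by (simp add: eq_diff_eq)

abbreviation fT :: "'a \<Rightarrow> qz" where "fT x \<equiv> fp_to_qz p (trace_to_prime p (2*f) x)"

lemma fT_add: "fT (x + y) = fT x + fT y"
  by (simp add: tr_add fp_add T_Fp)
lemma fT_0: "fT 0 = 0" by (simp add: tr_0 fp_0)
lemma fT_neg: "fT (- x) = - fT x"
  by (simp add: tr_neg fp_neg T_Fp)
lemma fT_diff: "fT (x - y) = fT x - fT y"
  by (simp add: tr_diff fp_diff T_Fp)
lemma fT_addI: "x = y + z \<Longrightarrow> fT x = fT y + fT z" by (simp add: fT_add)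
lemma fT_diffI: "x = y - z \<Longrightarrow> fT x = fT y - fT z" by (simp add: fT_diff)
lemma fT_sum: "fT (sum g A) = (\<Sum>i\<in>A. fT (g i))"
  by (simp add: tr_sum fp_sum T_Fp)
lemma fT_eq0: "fT x = 0 \<Longrightarrow> trace_to_prime p (2*f) x = 0"
  using fp_eq_0 T_Fp by blast
lemma fT_nondeg: "(x::'a) \<noteq> 0 \<Longrightarrow> \<exists>y. fT (x * y) \<noteq> 0"
  using T_nondeg fT_eq0 by blast
lemma fT_frob: "fT ((x::'a) ^ (p^f)) = fT x" by (simp add: T_frob)

lemma B_simp: "beta_R p f (a,b) (c,d) = fT (c * b - a * d)"
  by (simp add: beta_R_def)

lemma B_add2: "beta_R p f v (w + w' :: 'a \<times> 'a) = beta_R p f v w + beta_R p f v w'"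
  by (cases v, cases w, cases w') (simp add: B_simp, rule fT_addI, simp add: algebra_simps)
lemma B_add1: "beta_R p f (v + v' :: 'a \<times> 'a) w = beta_R p f v w + beta_R p f v' w"
  by (cases v, cases v', cases w) (simp add: B_simp, rule fT_addI, simp add: algebra_simps)
lemma B_diff1: "beta_R p f (v - v' :: 'a \<times> 'a) w = beta_R p f v w - beta_R p f v' w"
  by (cases v, cases v', cases w) (simp add: B_simp, rule fT_diffI, simp add: algebra_simps)
lemma B_diff2: "beta_R p f v (w - w' :: 'a \<times> 'a) = beta_R p f v w - beta_R p f v w'"
  by (cases v, cases w, cases w') (simp add: B_simp, rule fT_diffI, simp add: algebra_simps)
lemma B_zero2: "beta_R p f v (0 :: 'a \<times> 'a) = 0"
  by (cases v) (simp add: B_simp zero_prod_def fT_0)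
lemma B_zero1: "beta_R p f (0 :: 'a \<times> 'a) w = 0"
  by (cases w) (simp add: B_simp zero_prod_def fT_0)

lemma B_antisym: "beta_R p f v w = beta_R p f w (- v :: 'a \<times> 'a)"
  by (cases v, cases w) (simp add: B_simp algebra_simps)

lemma B_J: "beta_R p f (Rmult (p^f) r v) w = beta_R p f (v :: 'a \<times> 'a) (Rmult (p^f) (J_R (p^f) r) w)"
proof -
  obtain r1 r2 where r: "r = (r1, r2)" by (cases r)
  obtain a' b' where v: "v = (a', b')" by (cases v)
  obtain a b where w: "w = (a, b)" by (cases w)
  have key: "fT (a' * r2^(p^f) * a^(p^f)) = fT (a * r2 * a'^(p^f))"
  proof -
    have "(a * r2 * a'^(p^f))^(p^f) = a' * r2^(p^f) * a^(p^f)"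
      by (simp add: power_mult_distrib fq_qq mult_ac)
    then show ?thesis using fT_frob[of "a * r2 * a'^(p^f)"] by simp
  qed
  have "beta_R p f (Rmult (p^f) r v) w = fT (a * (r1 * b' + r2 * a'^(p^f)) - r1 * a' * b)"
    by (simp add: r v w Rmult_simp B_simp)
  also have "\<dots> = fT (a * r1 * b' - r1 * a' * b) + fT (a * r2 * a'^(p^f))"
    by (rule fT_addI) (simp add: algebra_simps)
  also have "\<dots> = fT (a * r1 * b' - r1 * a' * b) + fT (a' * r2^(p^f) * a^(p^f))"
    by (simp add: key)
  also have "\<dots> = fT (r1 * a * b' - a' * (r1 * b - r2^(p^f) * a^(p^f)))"
    by (rule fT_addI[symmetric]) (simp add: algebra_simps)
  also have "\<dots> = beta_R p f v (Rmult (p^f) (J_R (p^f) r) w)"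
    by (simp add: r v w Rmult_simp B_simp J_R_def)
  finally show ?thesis .
qed

lemma B_nondeg1: "(v :: 'a \<times> 'a) \<noteq> 0 \<Longrightarrow> \<exists>w. beta_R p f v w \<noteq> 0"
proof -
  assume "v \<noteq> 0"
  obtain a b where v: "v = (a, b)" by (cases v)
  show ?thesis
  proof (cases "b = 0")
    case False
    then obtain y where "fT (b * y) \<noteq> 0" using fT_nondeg by blast
    then have "beta_R p f v (y, 0) \<noteq> 0" by (simp add: v B_simp mult.commute)
    then show ?thesis by blast
  next
    case True
    then have "a \<noteq> 0" using \<open>v \<noteq> 0\<close> v by (simp add: zero_prod_def)
    then obtain y where "fT (a * y) \<noteq> 0" using fT_nondeg by blast
    then have "beta_R p f v (0, - y) \<noteq> 0" by (simp add: v B_simp True)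
    then show ?thesis by blast
  qed
qed

lemma B_nondeg2: "(w :: 'a \<times> 'a) \<noteq> 0 \<Longrightarrow> \<exists>v. beta_R p f v w \<noteq> 0"
proof -
  assume "w \<noteq> 0"
  then obtain v where "beta_R p f w v \<noteq> 0" using B_nondeg1 by blast
  then have "beta_R p f (- v) w \<noteq> 0" using B_antisym[of "-v" w] by simp
  then show ?thesis by blast
qed

lemma RM_one: "Rmult (p^f) (r :: 'a \<times> 'a) Rone = r"
  using ring_R unfolding ring_on_def by blast
lemma RM_negL: "Rmult (p^f) (- r :: 'a \<times> 'a) v = - Rmult (p^f) r v"
  using RM_distR[of r "-r" v] RM_zeroL[of v] by (simp add: eq_neg_iff_add_eq_0 add.commute)

lemma B_biadd: "biadditive (beta_R p f :: 'a \<times> 'a \<Rightarrow> _)"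
  unfolding biadditive_def additive_hom_def by (simp add: B_add1 B_add2)

lemma B_inj: "inj (beta_R p f :: 'a \<times> 'a \<Rightarrow> _)"
proof (rule injI)
  fix v v' :: "'a \<times> 'a"
  assume eq: "beta_R p f v = beta_R p f v'"
  show "v = v'"
  proof (rule ccontr)
    assume "v \<noteq> v'"
    then obtain w where "beta_R p f (v - v') w \<noteq> 0" using B_nondeg1[of "v - v'"] by auto
    then show False using eq by (simp add: B_diff1)
  qed
qed

lemma B_surj:
  assumes add: "additive_hom (\<chi> :: 'a \<times> 'a \<Rightarrow> qz)"
  shows "\<exists>v. \<chi> = beta_R p f v"
proof (rule ccontr)
  assume nex: "\<not> ?thesis"
  have chi_add: "\<chi> (x + y) = \<chi> x + \<chi> y" for x y using add unfolding additive_hom_def by blast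
  have chi0: "\<chi> 0 = 0" using chi_add[of 0 0] by simp
  have inner: "(\<Sum>v\<in>UNIV. qe (\<chi> v - beta_R p f w v)) = 0" for w
  proof -
    from nex have "\<chi> \<noteq> beta_R p f w" by blast
    then obtain v0 where "\<chi> v0 \<noteq> beta_R p f w v0" by (meson ext)
    then have "\<chi> v0 - beta_R p f w v0 \<noteq> 0" by simp
    then show ?thesis
      by (intro char_sum_zero[of "\<lambda>v. \<chi> v - beta_R p f w v" v0]) (simp_all add: chi_add B_add2)
  qed
  have rest0: "(\<Sum>v\<in>UNIV-{0}. qe (\<chi> v) * (\<Sum>w\<in>UNIV. qe (- beta_R p f w v))) = 0"
  proof (rule sum.neutral, rule ballI)
    fix v :: "'a \<times> 'a" assume "v \<in> UNIV - {0}"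
    then have "v \<noteq> 0" by simp
    then obtain w0 where "beta_R p f w0 v \<noteq> 0" using B_nondeg2 by blast
    then have "(\<Sum>w\<in>UNIV. qe (- beta_R p f w v)) = 0"
      by (intro char_sum_zero[of "\<lambda>w. - beta_R p f w v" w0]) (simp_all add: B_add1)
    then show "qe (\<chi> v) * (\<Sum>w\<in>UNIV. qe (- beta_R p f w v)) = 0" by simp
  qed
  have "0 = (\<Sum>w\<in>UNIV. \<Sum>v\<in>UNIV. qe (\<chi> v - beta_R p f w v))" by (simp add: inner)
  also have "\<dots> = (\<Sum>v\<in>UNIV. qe (\<chi> v) * (\<Sum>w\<in>UNIV. qe (- beta_R p f w v)))"
    by (subst sum.swap) (simp add: sum_distrib_left qe_add[symmetric])
  also have "\<dots> = qe (\<chi> 0) * (\<Sum>w\<in>UNIV. qe (- beta_R p f w (0::'a\<times>'a))) +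
      (\<Sum>v\<in>UNIV-{0}. qe (\<chi> v) * (\<Sum>w\<in>UNIV. qe (- beta_R p f w v)))"
    using sum.remove[of "UNIV::('a \<times> 'a) set" 0 "\<lambda>v. qe (\<chi> v) * (\<Sum>w\<in>UNIV. qe (- beta_R p f w v))"] by simp
  also have "\<dots> = of_nat (card (UNIV :: ('a \<times> 'a) set))"
    by (simp add: chi0 qe_zero B_zero2 rest0)
  finally show False using finite_UNIV_card_ge_0[where 'a="'a \<times> 'a"] by simp
qed

lemma B_bij: "bij_betw (beta_R p f :: 'a \<times> 'a \<Rightarrow> _) UNIV {\<chi>. additive_hom \<chi>}"
  unfolding bij_betw_def
proof
  show "inj_on (beta_R p f :: 'a \<times> 'a \<Rightarrow> _) UNIV" using B_inj by simp
  show "range (beta_R p f :: 'a \<times> 'a \<Rightarrow> _) = {\<chi>. additive_hom \<chi>}"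
  proof
    show "range (beta_R p f :: 'a \<times> 'a \<Rightarrow> _) \<subseteq> {\<chi>. additive_hom \<chi>}"
      using B_biadd unfolding biadditive_def by auto
    show "{\<chi>. additive_hom \<chi>} \<subseteq> range (beta_R p f :: 'a \<times> 'a \<Rightarrow> _)"
      using B_surj by blast
  qed
qed

lemma transp_closed:
  "transp_form (beta_r (Rmult (p^f)) (beta_R p f) r) = beta_r (Rmult (p^f)) (beta_R p f) (- J_R (p^f) (r :: 'a \<times> 'a))"
proof (rule ext, rule ext)
  fix v w :: "'a \<times> 'a"
  have "transp_form (beta_r (Rmult (p^f)) (beta_R p f) r) v w = beta_R p f w (Rmult (p^f) r v)"
    by (simp add: transp_form_def beta_r_def)
  also have "\<dots> = beta_R p f (Rmult (p^f) r v) (- w)" by (rule B_antisym)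
  also have "\<dots> = beta_R p f v (Rmult (p^f) (J_R (p^f) r) (- w))" by (rule B_J)
  also have "\<dots> = beta_R p f v (Rmult (p^f) (- J_R (p^f) r) w)" by (simp add: RM_negR RM_negL)
  finally show "transp_form (beta_r (Rmult (p^f)) (beta_R p f) r) v w =
    beta_r (Rmult (p^f)) (beta_R p f) (- J_R (p^f) r) v w" by (simp add: beta_r_def)
qed

lemma beta_r_inj: "inj (beta_r (Rmult (p^f)) (beta_R p f :: 'a \<times> 'a \<Rightarrow> _))"
proof (rule injI)
  fix r s :: "'a \<times> 'a"
  assume eq: "beta_r (Rmult (p^f)) (beta_R p f) r = beta_r (Rmult (p^f)) (beta_R p f) s"
  show "r = s"
  proof (rule ccontr)
    assume "r \<noteq> s"
    then obtain v where v: "beta_R p f v (r - s) \<noteq> 0" using B_nondeg2[of "r - s"] by auto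
    have "beta_R p f v (Rmult (p^f) r Rone) = beta_R p f v (Rmult (p^f) s Rone)"
      using eq unfolding beta_r_def by metis
    then have "beta_R p f v (r - s) = 0" by (simp add: RM_one B_diff2)
    then show False using v by simp
  qed
qed

lemma admissible_R: "admissible (Rmult (p^f)) (beta_R p f :: 'a \<times> 'a \<Rightarrow> _)"
  unfolding admissible_def
proof (intro conjI ballI)
  show "biadditive (beta_R p f :: 'a \<times> 'a \<Rightarrow> _)" by (rule B_biadd)
  show "bij_betw (beta_R p f :: 'a \<times> 'a \<Rightarrow> _) UNIV {\<chi>. additive_hom \<chi>}" by (rule B_bij)
  fix m assume "m \<in> forms_M (Rmult (p^f)) (beta_R p f :: 'a \<times> 'a \<Rightarrow> _)"
  then obtain r where "m = beta_r (Rmult (p^f)) (beta_R p f) r" by (auto simp: forms_M_def)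
  then show "transp_form m \<in> forms_M (Rmult (p^f)) (beta_R p f)"
    by (simp add: transp_closed forms_M_def)
next
  show "bij_betw (beta_r (Rmult (p^f)) (beta_R p f :: 'a \<times> 'a \<Rightarrow> _)) UNIV (forms_M (Rmult (p^f)) (beta_R p f))"
    unfolding forms_M_def bij_betw_def using beta_r_inj by simp
qed

definition Nm :: "'a \<Rightarrow> 'a" where "Nm a = a * a ^ (p^f)"

lemma Nm_q: "Nm a ^ (p^f) = Nm a"
  by (simp add: Nm_def power_mult_distrib fq_qq mult.commute)

lemma Nm_mult: "Nm (a * b) = Nm a * Nm b"
  by (simp add: Nm_def power_mult_distrib mult_ac)

lemma fq_mult: "x ^ (p^f) = x \<Longrightarrow> y ^ (p^f) = y \<Longrightarrow> (x * y :: 'a) ^ (p^f) = x * y"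
  by (simp add: power_mult_distrib)

abbreviation tq :: "'a \<Rightarrow> 'a" where "tq \<equiv> trace_to_prime p f"

lemma tq_Fp: "(y::'a) ^ (p^f) = y \<Longrightarrow> Fp (tq y)" by (rule tr_Fp)

definition Qf :: "'a \<Rightarrow> 'a \<times> 'a \<Rightarrow> qz" where
  "Qf n v = fp_to_qz p (tq (n * Nm (fst v)))"

lemma Nm_add: "Nm (a + c) = Nm a + Nm c + (a * c^(p^f) + c * a^(p^f))"
  by (simp add: Nm_def fq_add algebra_simps)

lemma Qf_Fp: "n ^ (p^f) = n \<Longrightarrow> Fp (tq (n * Nm x))"
  by (rule tq_Fp) (simp add: fq_mult Nm_q)

lemma Qf_quad: assumes n: "n ^ (p^f) = n" shows "Qf n \<in> Quad0"
proof -
  have F: "Fp (tq (n * Nm x))" for x using Qf_Fp[OF n] .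
  have "Qf n 0 = 0" by (simp add: Qf_def Nm_def zero_prod_def tr_0 fp_0 power_0_left)
  moreover have "Qf n (x + y + z) - Qf n (x + y) - Qf n (x + z) - Qf n (y + z) + Qf n x + Qf n y + Qf n z = 0" for x y z
  proof -
    obtain a where a: "a = fst x" by simp
    obtain b where b: "b = fst y" by simp
    obtain c where c: "c = fst z" by simp
    let ?h = "\<lambda>u. tq (n * Nm u)"
    have "?h (a+b+c) - ?h (a+b) - ?h (a+c) - ?h (b+c) + ?h a + ?h b + ?h c
       = tq (n * (Nm (a+b+c) - Nm (a+b) - Nm (a+c) - Nm (b+c) + Nm a + Nm b + Nm c))"
      by (simp add: tr_add tr_diff algebra_simps)
    also have "Nm (a+b+c) - Nm (a+b) - Nm (a+c) - Nm (b+c) + Nm a + Nm b + Nm c = 0"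
      by (simp add: Nm_add fq_add algebra_simps)
    finally have E: "?h (a+b+c) - ?h (a+b) - ?h (a+c) - ?h (b+c) + ?h a + ?h b + ?h c = 0"
      by (simp add: tr_0)
    have "fp_to_qz p (?h (a+b+c) - ?h (a+b) - ?h (a+c) - ?h (b+c) + ?h a + ?h b + ?h c) = 0"
      by (simp only: E fp_0)
    then show ?thesis unfolding Qf_def using a b c
      by (simp add: fp_add fp_diff F Fp_add Fp_diff)
  qed
  ultimately show ?thesis unfolding Quad0_def by blast
qed

lemma fT_split: "fT z = fp_to_qz p (tq (z + z ^ (p^f)))"
  by (simp add: T_split tr_add)

lemma Qf_lambda: assumes n: "n ^ (p^f) = n"
  shows "lambda_q (Qf n) = beta_r (Rmult (p^f)) (beta_R p f) (0, - n)"
proof (rule ext, rule ext)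
  fix v w :: "'a \<times> 'a"
  obtain a b where v: "v = (a,b)" by (cases v)
  obtain c d where w: "w = (c,d)" by (cases w)
  have F: "Fp (tq (n * Nm x))" for x using Qf_Fp[OF n] .
  have "lambda_q (Qf n) v w = fp_to_qz p (tq (n * Nm (a + c)) - tq (n * Nm a) - tq (n * Nm c))"
    by (simp add: lambda_q_def Qf_def v w fp_diff F Fp_diff)
  also have "tq (n * Nm (a + c)) - tq (n * Nm a) - tq (n * Nm c) = tq (n * (a * c^(p^f) + c * a^(p^f)))"
    by (simp add: tr_add tr_diff[symmetric] Nm_add algebra_simps)
  also have "n * (a * c^(p^f) + c * a^(p^f)) = n * a * c^(p^f) + (n * a * c^(p^f))^(p^f)"
    using n by (simp add: power_mult_distrib fq_qq algebra_simps)
  also have "fp_to_qz p (tq \<dots>) = fT (n * a * c^(p^f))" by (simp add: fT_split)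
  also have "\<dots> = beta_r (Rmult (p^f)) (beta_R p f) (0, - n) v w"
  proof -
    have e: "a * (n * c ^ (p^f)) = n * a * c ^ (p^f)" by (simp add: mult_ac)
    show ?thesis by (simp add: beta_r_def v w Rmult_simp B_simp e)
  qed
  finally show "lambda_q (Qf n) v w = beta_r (Rmult (p^f)) (beta_R p f) (0, - n) v w" .
qed

lemma diag_Qf: "diag_form (beta_r (Rmult (p^f)) (beta_R p f) r) = Qf (- snd r - snd r ^ (p^f))"
proof (rule ext)
  fix v :: "'a \<times> 'a"
  obtain a b where v: "v = (a,b)" by (cases v)
  obtain r1 r2 where r: "r = (r1,r2)" by (cases r)
  have "diag_form (beta_r (Rmult (p^f)) (beta_R p f) r) v = fT (- (r2 * Nm a))"
    by (simp add: diag_form_def beta_r_def v r Rmult_simp B_simp Nm_def algebra_simps)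
  also have "\<dots> = fp_to_qz p (tq ((- r2 - r2 ^ (p^f)) * Nm a))"
  proof -
    have z: "(-(r2 * Nm a)) + (-(r2 * Nm a))^(p^f) = (- r2 - r2^(p^f)) * Nm a"
      by (simp add: fq_neg power_mult_distrib Nm_q algebra_simps)
    show ?thesis unfolding fT_split z by (rule refl)
  qed
  finally show "diag_form (beta_r (Rmult (p^f)) (beta_R p f) r) v = Qf (- snd r - snd r ^ (p^f)) v"
    by (simp add: Qf_def v r)
qed

lemma phi0_r: "phi_r (Rmult (p^f)) (phi0_R p f) r = Qf (Nm (fst r))"
proof (rule ext)
  fix v :: "'a \<times> 'a"
  obtain a b where v: "v = (a,b)" by (cases v)
  obtain r1 r2 where r: "r = (r1,r2)" by (cases r)
  show "phi_r (Rmult (p^f)) (phi0_R p f) r v = Qf (Nm (fst r)) v"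
    by (simp add: phi_r_def phi0_R_def Qf_def v r Rmult_simp Nm_def power_mult_distrib mult_ac)
qed

lemma Quad0_zero: "(\<lambda>_. 0) \<in> (Quad0 :: ('a \<times> 'a \<Rightarrow> qz) set)"
  by (simp add: Quad0_def)

lemma Quad0_diff: "\<phi> \<in> Quad0 \<Longrightarrow> \<psi> \<in> Quad0 \<Longrightarrow> (\<lambda>v. \<phi> v - \<psi> v) \<in> Quad0"
proof -
  assume a: "\<phi> \<in> Quad0" "\<psi> \<in> Quad0"
  show ?thesis unfolding Quad0_def
  proof (intro CollectI conjI allI)
    show "\<phi> 0 - \<psi> 0 = 0" using a by (simp add: Quad0_def)
    fix x y z
    have e1: "\<phi> (x + y + z) - \<phi> (x + y) - \<phi> (x + z) - \<phi> (y + z) + \<phi> x + \<phi> y + \<phi> z = 0"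
      using a by (simp add: Quad0_def)
    have e2: "\<psi> (x + y + z) - \<psi> (x + y) - \<psi> (x + z) - \<psi> (y + z) + \<psi> x + \<psi> y + \<psi> z = 0"
      using a by (simp add: Quad0_def)
    have "(\<phi> (x + y + z) - \<psi> (x + y + z)) - (\<phi> (x + y) - \<psi> (x + y)) - (\<phi> (x + z) - \<psi> (x + z))
      - (\<phi> (y + z) - \<psi> (y + z)) + (\<phi> x - \<psi> x) + (\<phi> y - \<psi> y) + (\<phi> z - \<psi> z)
      = (\<phi> (x + y + z) - \<phi> (x + y) - \<phi> (x + z) - \<phi> (y + z) + \<phi> x + \<phi> y + \<phi> z)
      - (\<psi> (x + y + z) - \<psi> (x + y) - \<psi> (x + z) - \<psi> (y + z) + \<psi> x + \<psi> y + \<psi> z)"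
      by (simp add: algebra_simps)
    then show "(\<phi> (x + y + z) - \<psi> (x + y + z)) - (\<phi> (x + y) - \<psi> (x + y)) - (\<phi> (x + z) - \<psi> (x + z))
      - (\<phi> (y + z) - \<psi> (y + z)) + (\<phi> x - \<psi> x) + (\<phi> y - \<psi> y) + (\<phi> z - \<psi> z) = 0"
      using e1 e2 by simp
  qed
qed

lemma Nm_fq: "Nm (a::'a) ^ (p^f) = Nm a" by (rule Nm_q)

lemma Phi_quad: "\<phi> \<in> Phi_R p f \<Longrightarrow> \<phi> \<in> (Quad0 :: ('a \<times> 'a \<Rightarrow> qz) set)"
  unfolding Phi_R_def
proof (induction rule: gen_subgroup.induct)
  case (gen_base \<phi>)
  then obtain r :: "'a \<times> 'a" where "\<phi> = phi_r (Rmult (p^f)) (phi0_R p f) r" by blast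
  then show ?case by (simp add: phi0_r Qf_quad Nm_q)
next
  case gen_zero then show ?case by (rule Quad0_zero)
next
  case (gen_diff \<phi> \<psi>) then show ?case using Quad0_diff by blast
qed

lemma Phi_phir: "\<phi> \<in> Phi_R p f \<Longrightarrow> phi_r (Rmult (p^f)) \<phi> (r :: 'a \<times> 'a) \<in> Phi_R p f"
  unfolding Phi_R_def
proof (induction rule: gen_subgroup.induct)
  case (gen_base \<phi>)
  then obtain s :: "'a \<times> 'a" where s: "\<phi> = phi_r (Rmult (p^f)) (phi0_R p f) s" by blast
  have e: "phi_r (Rmult (p^f)) \<phi> r = phi_r (Rmult (p^f)) (phi0_R p f) (Rmult (p^f) s r)"
    unfolding s phi_r_def by (rule ext) (simp only: RM_assoc)
  have "phi_r (Rmult (p^f)) (phi0_R p f) (Rmult (p^f) s r) \<in> {phi_r (Rmult (p^f)) (phi0_R p f) r |r. True}"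
    by blast
  then show ?case unfolding e by (rule gen_subgroup.gen_base)
next
  case gen_zero
  have e: "phi_r (Rmult (p^f)) (\<lambda>_::'a \<times> 'a. 0::qz) r = (\<lambda>_. 0)" by (simp add: phi_r_def)
  show ?case unfolding e by (rule gen_subgroup.gen_zero)
next
  case (gen_diff \<phi> \<psi>)
  have e: "phi_r (Rmult (p^f)) (\<lambda>v. \<phi> v - \<psi> v) r = (\<lambda>v. phi_r (Rmult (p^f)) \<phi> r v - phi_r (Rmult (p^f)) \<psi> r v)"
    by (simp add: phi_r_def)
  show ?case unfolding e by (rule gen_subgroup.gen_diff[OF gen_diff.IH])
qed

lemma Phi_diag: "diag_form ` forms_M (Rmult (p^f)) (beta_R p f :: 'a \<times> 'a \<Rightarrow> _) \<subseteq> Phi_R p f"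
proof
  fix g assume "g \<in> diag_form ` forms_M (Rmult (p^f)) (beta_R p f :: 'a \<times> 'a \<Rightarrow> _)"
  then obtain r :: "'a \<times> 'a" where g: "g = diag_form (beta_r (Rmult (p^f)) (beta_R p f) r)"
    by (auto simp: forms_M_def)
  define m where "m = - snd r - snd r ^ (p^f)"
  have "m ^ (p^f) = m" by (simp add: m_def fq_diff fq_neg fq_qq)
  then obtain a0 where a0: "a0 * a0 ^ (p^f) = m" using norm_surj by blast
  have "g = phi_r (Rmult (p^f)) (phi0_R p f) (a0, 0)"
    by (simp add: g diag_Qf phi0_r m_def[symmetric] Nm_def a0)
  then show "g \<in> Phi_R p f" unfolding Phi_R_def by (auto intro: gen_subgroup.gen_base)
qed

lemma Phi_lambda: "\<phi> \<in> Phi_R p f \<Longrightarrow> lambda_q \<phi> \<in> forms_M (Rmult (p^f)) (beta_R p f :: 'a \<times> 'a \<Rightarrow> _)"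
  unfolding Phi_R_def
proof (induction rule: gen_subgroup.induct)
  case (gen_base \<phi>)
  then obtain r :: "'a \<times> 'a" where "\<phi> = phi_r (Rmult (p^f)) (phi0_R p f) r" by blast
  then have "lambda_q \<phi> = beta_r (Rmult (p^f)) (beta_R p f) (0, - Nm (fst r))"
    by (simp add: phi0_r Qf_lambda Nm_q)
  then show ?case by (simp add: forms_M_def)
next
  case gen_zero
  have "lambda_q (\<lambda>_::'a \<times> 'a. 0::qz) = beta_r (Rmult (p^f)) (beta_R p f) 0"
    by (simp add: lambda_q_def beta_r_def RM_zeroL B_zero2 fun_eq_iff)
  then show ?case by (simp add: forms_M_def)
next
  case (gen_diff \<phi> \<psi>)
  then obtain r s :: "'a \<times> 'a" where r: "lambda_q \<phi> = beta_r (Rmult (p^f)) (beta_R p f) r"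
    and s: "lambda_q \<psi> = beta_r (Rmult (p^f)) (beta_R p f) s" by (auto simp: forms_M_def)
  have "lambda_q (\<lambda>v. \<phi> v - \<psi> v) = (\<lambda>v w. lambda_q \<phi> v w - lambda_q \<psi> v w)"
    by (simp add: lambda_q_def fun_eq_iff algebra_simps)
  also have "\<dots> = beta_r (Rmult (p^f)) (beta_R p f) (r - s)"
    by (simp add: r s beta_r_def fun_eq_iff RM_diffL B_diff2)
  finally show ?case by (simp add: forms_M_def)
qed

lemma form_ring_R: "form_ring (Rmult (p^f)) (Rone :: 'a \<times> 'a) (Rmult (p^f)) (beta_R p f) (Phi_R p f)"
  unfolding form_ring_def
proof (intro conjI)
  show "left_module_on (Rmult (p^f)) (Rone :: 'a \<times> 'a) (Rmult (p^f))" by (rule module_R)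
  show "admissible (Rmult (p^f)) (beta_R p f :: 'a \<times> 'a \<Rightarrow> _)" by (rule admissible_R)
  show "Phi_R p f \<subseteq> (Quad0 :: ('a \<times> 'a \<Rightarrow> qz) set)" using Phi_quad by blast
  show "is_subgroup_fun (Phi_R p f :: ('a \<times> 'a \<Rightarrow> qz) set)"
    unfolding is_subgroup_fun_def Phi_R_def by (auto intro: gen_subgroup.gen_zero gen_subgroup.gen_diff)
  show "\<forall>\<phi>\<in>Phi_R p f. \<forall>r :: 'a \<times> 'a. phi_r (Rmult (p^f)) \<phi> r \<in> Phi_R p f" using Phi_phir by blast
  show "diag_form ` forms_M (Rmult (p^f)) (beta_R p f :: 'a \<times> 'a \<Rightarrow> _) \<subseteq> Phi_R p f" by (rule Phi_diag)
  show "lambda_q ` Phi_R p f \<subseteq> forms_M (Rmult (p^f)) (beta_R p f :: 'a \<times> 'a \<Rightarrow> _)" using Phi_lambda by blast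
qed

lemma sumB:
  fixes x c :: "'n::finite \<Rightarrow> 'a \<times> 'a" and s :: "'a \<times> 'a"
  shows "(\<Sum>i\<in>UNIV. beta_R p f (x i) (Rmult (p^f) s (c i))) =
    fT (fst s * (\<Sum>i\<in>UNIV. snd (x i) * fst (c i) - fst (x i) * snd (c i))
        - snd s * (\<Sum>i\<in>UNIV. fst (x i) * fst (c i) ^ (p^f)))"
proof -
  have "(\<Sum>i\<in>UNIV. beta_R p f (x i) (Rmult (p^f) s (c i))) =
     (\<Sum>i\<in>UNIV. fT (fst s * (snd (x i) * fst (c i) - fst (x i) * snd (c i))
        - snd s * (fst (x i) * fst (c i) ^ (p^f))))"
  proof (rule sum.cong[OF refl])
    fix i
    have e: "fst (Rmult (p^f) s (c i)) * snd (x i) - fst (x i) * snd (Rmult (p^f) s (c i)) =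
      fst s * (snd (x i) * fst (c i) - fst (x i) * snd (c i)) - snd s * (fst (x i) * fst (c i) ^ (p^f))"
      by (simp add: Rmult_def algebra_simps)
    show "beta_R p f (x i) (Rmult (p^f) s (c i)) = fT (fst s * (snd (x i) * fst (c i) - fst (x i) * snd (c i))
        - snd s * (fst (x i) * fst (c i) ^ (p^f)))"
      unfolding beta_R_def e by (rule refl)
  qed
  also have "\<dots> = fT (\<Sum>i\<in>UNIV. fst s * (snd (x i) * fst (c i) - fst (x i) * snd (c i))
        - snd s * (fst (x i) * fst (c i) ^ (p^f)))"
    by (rule fT_sum[symmetric])
  also have "(\<Sum>i\<in>UNIV. fst s * (snd (x i) * fst (c i) - fst (x i) * snd (c i))
        - snd s * (fst (x i) * fst (c i) ^ (p^f))) =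
     fst s * (\<Sum>i\<in>UNIV. snd (x i) * fst (c i) - fst (x i) * snd (c i))
        - snd s * (\<Sum>i\<in>UNIV. fst (x i) * fst (c i) ^ (p^f))"
    by (simp add: sum_subtractf sum_distrib_left right_diff_distrib)
  finally show ?thesis .
qed

lemma herm_sum:
  fixes x c :: "'n::finite \<Rightarrow> 'a \<times> 'a"
  shows "(\<Sum>i\<in>UNIV. Rmult (p^f) (x i) (Rconj (p^f) (c i))) =
    ((\<Sum>i\<in>UNIV. fst (x i) * fst (c i) ^ (p^f)), (\<Sum>i\<in>UNIV. snd (x i) * fst (c i) - fst (x i) * snd (c i)))"
  by (simp add: prod_eq_iff fst_sum snd_sum Rmult_def Rconj_def fq_qq algebra_simps)

lemma Bdual_eq:
  fixes C :: "('n::finite \<Rightarrow> 'a \<times> 'a) set"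
  assumes sub: "left_submodule (Rmult (p^f)) C"
  shows "{x. \<forall>c\<in>C. (\<Sum>i\<in>UNIV. beta_R p f (x i) (c i)) = 0} = herm_dual (p^f) C"
proof (rule Set.set_eqI, rule iffI)
  fix x assume "x \<in> {x. \<forall>c\<in>C. (\<Sum>i\<in>UNIV. beta_R p f (x i) (c i)) = 0}"
  then have hx: "\<forall>c\<in>C. (\<Sum>i\<in>UNIV. beta_R p f (x i) (c i)) = 0" by simp
  show "x \<in> herm_dual (p^f) C" unfolding herm_dual_def
  proof (intro CollectI ballI)
    fix c assume cC: "c \<in> C"
    define X where "X = (\<Sum>i\<in>UNIV. snd (x i) * fst (c i) - fst (x i) * snd (c i))"
    define Y where "Y = (\<Sum>i\<in>UNIV. fst (x i) * fst (c i) ^ (p^f))"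
    have key: "fT (s1 * X - s2 * Y) = 0" for s1 s2
    proof -
      have "(\<lambda>i. Rmult (p^f) (s1, s2) (c i)) \<in> C" using sub cC unfolding left_submodule_def by blast
      then have "(\<Sum>i\<in>UNIV. beta_R p f (x i) (Rmult (p^f) (s1, s2) (c i))) = 0" using hx[rule_format] by simp
      then show ?thesis using sumB[of x "(s1,s2)" c] by (simp add: X_def Y_def)
    qed
    have "X = 0"
    proof (rule ccontr)
      assume "X \<noteq> 0"
      then obtain y where "fT (X * y) \<noteq> 0" using fT_nondeg by blast
      then show False using key[of y 0] by (simp add: mult.commute)
    qed
    moreover have "Y = 0"
    proof (rule ccontr)
      assume "Y \<noteq> 0"
      then obtain y where "fT (Y * y) \<noteq> 0" using fT_nondeg by blast
      then show False using key[of 0 "- y"] by (simp add: mult.commute)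
    qed
    ultimately show "(\<Sum>i\<in>UNIV. Rmult (p^f) (x i) (Rconj (p^f) (c i))) = 0"
      by (simp add: herm_sum X_def[symmetric] Y_def[symmetric] zero_prod_def)
  qed
next
  fix x assume "x \<in> herm_dual (p^f) C"
  then have hx: "\<forall>c\<in>C. (\<Sum>i\<in>UNIV. Rmult (p^f) (x i) (Rconj (p^f) (c i))) = 0"
    by (simp add: herm_dual_def)
  show "x \<in> {x. \<forall>c\<in>C. (\<Sum>i\<in>UNIV. beta_R p f (x i) (c i)) = 0}"
  proof (intro CollectI ballI)
    fix c assume "c \<in> C"
    then have "(\<Sum>i\<in>UNIV. snd (x i) * fst (c i) - fst (x i) * snd (c i)) = 0"
      using hx herm_sum[of x c] by (simp add: zero_prod_def)
    moreover have "(\<Sum>i\<in>UNIV. beta_R p f (x i) (c i)) = (\<Sum>i\<in>UNIV. beta_R p f (x i) (Rmult (p^f) Rone (c i)))"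
      by (simp add: Rmult_def Rone_def)
    ultimately show "(\<Sum>i\<in>UNIV. beta_R p f (x i) (c i)) = 0"
      by (simp add: sumB Rone_def fT_0)
  qed
qed

lemma Phi_vanish:
  fixes C :: "('n::finite \<Rightarrow> 'a \<times> 'a) set"
  assumes "C \<subseteq> herm_dual (p^f) C" and cC: "c \<in> C"
  shows "\<phi> \<in> Phi_R p f \<Longrightarrow> (\<Sum>i\<in>UNIV. \<phi> (c i)) = 0"
proof -
  have "(\<Sum>i\<in>UNIV. Rmult (p^f) (c i) (Rconj (p^f) (c i))) = 0"
    using assms unfolding herm_dual_def by blast
  then have N0: "(\<Sum>i\<in>UNIV. Nm (fst (c i))) = 0"
    using herm_sum[of c c] by (simp add: Nm_def zero_prod_def)
  show "\<phi> \<in> Phi_R p f \<Longrightarrow> (\<Sum>i\<in>UNIV. \<phi> (c i)) = 0"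
    unfolding Phi_R_def
  proof (induction rule: gen_subgroup.induct)
    case (gen_base \<phi>)
    then obtain r :: "'a \<times> 'a" where "\<phi> = phi_r (Rmult (p^f)) (phi0_R p f) r" by blast
    then have phi: "\<phi> = Qf (Nm (fst r))" by (simp add: phi0_r)
    have F: "Fp (tq (Nm (fst r) * Nm x))" for x by (rule Qf_Fp) (rule Nm_q)
    have "(\<Sum>i\<in>UNIV. \<phi> (c i)) = fp_to_qz p (\<Sum>i\<in>UNIV. tq (Nm (fst r) * Nm (fst (c i))))"
      by (simp add: phi Qf_def fp_sum F)
    also have "\<dots> = fp_to_qz p (tq (Nm (fst r) * (\<Sum>i\<in>UNIV. Nm (fst (c i)))))"
      by (simp add: tr_sum sum_distrib_left)
    also have "\<dots> = 0" by (simp add: N0 tr_0 fp_0)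
    finally show ?case .
  next
    case gen_zero then show ?case by simp
  next
    case (gen_diff \<phi> \<psi>) then show ?case by (simp add: sum_subtractf)
  qed
qed

lemma code_iff:
  fixes C :: "('n::finite \<Rightarrow> 'a \<times> 'a) set"
  assumes sub: "left_submodule (Rmult (p^f)) C"
  shows "is_code_of_type (Rmult (p^f)) (beta_R p f) (Phi_R p f) C \<longleftrightarrow> C = herm_dual (p^f) C"
proof
  assume "is_code_of_type (Rmult (p^f)) (beta_R p f) (Phi_R p f) C"
  then show "C = herm_dual (p^f) C" using Bdual_eq[OF sub] unfolding is_code_of_type_def by simp
next
  assume h: "C = herm_dual (p^f) C"
  show "is_code_of_type (Rmult (p^f)) (beta_R p f) (Phi_R p f) C"
    unfolding is_code_of_type_def
  proof (intro conjI ballI)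
    show "left_submodule (Rmult (p^f)) C" by (rule sub)
    show "C = {x. \<forall>c\<in>C. (\<Sum>i\<in>UNIV. beta_R p f (x i) (c i)) = 0}" using Bdual_eq[OF sub] h by simp
    fix c and \<phi> :: "'a \<times> 'a \<Rightarrow> qz" assume "c \<in> C" "\<phi> \<in> Phi_R p f"
    then show "(\<Sum>i\<in>UNIV. \<phi> (c i)) = 0" using Phi_vanish[of C c \<phi>] h by simp
  qed
qed

end
theorem mainTheorem8:
  fixes p f :: nat
    and C :: "('n::finite \<Rightarrow> 'a::{field,finite} \<times> 'a) set"
  assumes "prime p"
    and "card (UNIV :: 'a set) = (p ^ f) ^ 2"
  shows "form_ring (Rmult (p ^ f)) (Rone :: 'a \<times> 'a) (Rmult (p ^ f)) (beta_R p f) (Phi_R p f)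
    \<and> (\<forall>r v w :: 'a \<times> 'a.
         beta_R p f (Rmult (p ^ f) r v) w = beta_R p f v (Rmult (p ^ f) (J_R (p ^ f) r) w))
    \<and> (\<forall>v w :: 'a \<times> 'a. beta_R p f v w = beta_R p f w (- v))
    \<and> (left_submodule (Rmult (p ^ f)) C \<longrightarrow>
         (is_code_of_type (Rmult (p ^ f)) (beta_R p f) (Phi_R p f) C \<longleftrightarrow> C = herm_dual (p ^ f) C))"
proof -
  interpret FF p f "TYPE('a)" using assms by unfold_locales
  show ?thesis using form_ring_R B_J B_antisym code_iff by blast
qed

end
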